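(* Consider the hierarchical Gaussian $K$-armed bandit and the algorithm HierTS described in the context. Fix any round $t$, and let $\psi_t = (\psi_t(1), \dots, \psi_t(L_t))$ be the list of nodes on the path from the root $\psi_t(1) = 1$ to the action node $\psi_t(L_t) = A_t$. Then the marginal posterior variance of $\theta_{*, A_t}$ satisfies \[ \mathrm{Var}(\theta_{*, A_t} \mid H_t) = \sum_{i=1}^{L_t} \bigg(\prod_{j=i+1}^{L_t} \frac{\hat{\sigma}_{t, \psi_t(j)}^4}{\sigma_{0, \psi_t(j)}^4}\bigg) \hat{\sigma}_{t, \psi_t(i)}^2\,. \]
   Context: Tree and model. Let $\mathcal{T}$ be a rooted tree with node set $\mathcal{V}$, root labeled $1$, in which every internal node has at least $2$ children. For a node $i \neq 1$, $\mathsf{pa}(i)$ is its parent; $\mathsf{ch}(i)$ is the set of children of $i$. The leaves form the action set $\mathcal{A}$, $|\mathcal{A}| = K$. Node parameters $\theta_{*, i} \in \mathbb{R}$ are generated as $\theta_{*, 1} \sim \mathcal{N}(\mu_1, \sigma_{0,1}^2)$ and, for $i \neq 1$, $\theta_{*, i} \mid \theta_{*, \mathsf{pa}(i)} \sim \mathcal{N}(\theta_{*, \mathsf{pa}(i)}, \sigma_{0,i}^2)$, with known $\mu_1$ and $\sigma_{0,i} > 0$. In each round $t$ the agent takes $A_t \in \mathcal{A}$ and observes $Y_t \sim \mathcal{N}(\theta_{*, A_t}, \sigma^2)$ (independent noise, known $\sigma > 0$). The history is $H_t = (A_\ell, Y_\ell)_{\ell < t}$. HierTS samples $\Theta_t$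 exactly from the posterior of $(\theta_{*,i})_{i \in \mathcal{V}}$ given $H_t$ and takes $A_t = \arg\max_{a \in \mathcal{A}} \theta_{t,a}$. Conditional posterior variances. For a node $i \neq 1$, $\hat{\sigma}_{t,i}^2$ is the variance of $\theta_{*, i}$ conditioned on $H_t$ and on $\theta_{*, \mathsf{pa}(i)}$ (it does not depend on the value of the parent); for the root, $\hat{\sigma}_{t,1}^2 = \mathrm{Var}(\theta_{*,1} \mid H_t)$. Explicitly, with $\mathcal{S}_{t,a} = \{\ell < t : A_\ell = a\}$: for an action node $a$, $\hat{\sigma}_{t,a}^{-2} = \sigma_{0,a}^{-2} + |\mathcal{S}_{t,a}| \sigma^{-2}$; for a non-action node $i$, $\hat{\sigma}_{t,i}^{-2} = \sigma_{0,i}^{-2} + \sum_{j \in \mathsf{ch}(i)} \tilde{\sigma}_{t,j}^{-2}$, where recursively $\tilde{\sigma}_{t,j}^{2} = \sigma_{0,j}^2 + \sigma^2/|\mathcal{S}_{t,j}|$ for an action node $j$ (with $\tilde{\sigma}_{t,j}^{-2} = 0$ if $|\mathcal{S}_{t,j}| = 0$) and $\tilde{\sigma}_{t,j}^{2} = \sigma_{0,j}^2 + \big(\sum_{k \in \mathsf{ch}(j)} \tilde{\sigma}_{t,k}^{-2}\big)^{-1}$ for a non-action node $j$. *)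

theory Defs
  imports "HOL-Analysis.Analysis"
begin

text \<open>Hierarchical Gaussian bandit on a tree whose nodes form the finite type 'n.
  The tree is given by a root r and a parent map pa (pa r is irrelevant).\<close>

definition children :: "'n \<Rightarrow> ('n \<Rightarrow> 'n) \<Rightarrow> 'n \<Rightarrow> 'n set" where
  "children r pa i = {j. j \<noteq> r \<and> pa j = i}"

definition is_leaf :: "'n \<Rightarrow> ('n \<Rightarrow> 'n) \<Rightarrow> 'n \<Rightarrow> bool" where
  "is_leaf r pa i \<longleftrightarrow> children r pa i = {}"

definition is_tree :: "'n \<Rightarrow> ('n \<Rightarrow> 'n) \<Rightarrow> bool" where
  "is_tree r pa \<longleftrightarrow> pa r = r \<and> (\<forall>i. \<exists>m. (pa ^^ m) i = r)
     \<and> (\<forall>i. \<not> is_leaf r pa i \<longrightarrow> card (children r pa i) \<ge> 2)"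

definition ancestors :: "('n \<Rightarrow> 'n) \<Rightarrow> 'n \<Rightarrow> 'n set" where
  "ancestors pa i = {k. \<exists>m. (pa ^^ m) i = k}"

definition pulls :: "('n \<times> real) list \<Rightarrow> 'n \<Rightarrow> nat" where
  "pulls H a = length (filter (\<lambda>l. fst l = a) H)"

definition prior_cov :: "('n \<Rightarrow> 'n) \<Rightarrow> ('n::finite \<Rightarrow> real) \<Rightarrow> real^'n^'n" where
  "prior_cov pa s0 = (\<chi> i j. \<Sum>k\<in>ancestors pa i \<inter> ancestors pa j. (s0 k)^2)"

definition post_cov :: "('n \<Rightarrow> 'n) \<Rightarrow> ('n::finite \<Rightarrow> real) \<Rightarrow> real \<Rightarrow> ('n \<times> real) list \<Rightarrow> real^'n^'n" where
  "post_cov pa s0 s H = matrix_inv (matrix_inv (prior_cov pa s0)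
       + (\<chi> i j. if i = j then real (pulls H i) / s^2 else 0))"

definition post_var :: "('n \<Rightarrow> 'n) \<Rightarrow> ('n::finite \<Rightarrow> real) \<Rightarrow> real \<Rightarrow> ('n \<times> real) list \<Rightarrow> 'n \<Rightarrow> real" where
  "post_var pa s0 s H a = post_cov pa s0 s H $ a $ a"

text \<open>tilde-sigma^{-2}, computed with fuel (depth of the tree is < CARD('n)).
  Convention: (tilde sigma_j)^{-2} = 0 when no observations lie below j.\<close>
fun tprec_fuel :: "nat \<Rightarrow> 'n \<Rightarrow> ('n \<Rightarrow> 'n) \<Rightarrow> ('n \<Rightarrow> real) \<Rightarrow> real \<Rightarrow> ('n \<times> real) list \<Rightarrow> 'n \<Rightarrow> real" where
  "tprec_fuel m r pa s0 s H j =
     (if is_leaf r pa j then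
        (if pulls H j = 0 then 0 else 1 / ((s0 j)^2 + s^2 / real (pulls H j)))
      else (case m of 0 \<Rightarrow> 0
        | Suc m' \<Rightarrow> (let q = (\<Sum>k\<in>children r pa j. tprec_fuel m' r pa s0 s H k)
                    in if q = 0 then 0 else 1 / ((s0 j)^2 + 1 / q))))"

definition tprec :: "'n::finite \<Rightarrow> ('n \<Rightarrow> 'n) \<Rightarrow> ('n \<Rightarrow> real) \<Rightarrow> real \<Rightarrow> ('n \<times> real) list \<Rightarrow> 'n \<Rightarrow> real" where
  "tprec r pa s0 s H j = tprec_fuel CARD('n) r pa s0 s H j"

definition hat_var :: "'n::finite \<Rightarrow> ('n \<Rightarrow> 'n) \<Rightarrow> ('n \<Rightarrow> real) \<Rightarrow> real \<Rightarrow> ('n \<times> real) list \<Rightarrow> 'n \<Rightarrow> real" where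
  "hat_var r pa s0 s H i = 1 /
     (if is_leaf r pa i then 1 / (s0 i)^2 + real (pulls H i) / s^2
      else 1 / (s0 i)^2 + (\<Sum>j\<in>children r pa i. tprec r pa s0 s H j))"

end

theory Submission
  imports Defs
begin


lemma matrix_inv_unique:
  fixes A B :: "real^'n^'n"
  assumes "A ** B = mat 1"
  shows "matrix_inv A = B"
proof -
  have ex: "\<exists>A'. A ** A' = mat 1 \<and> A' ** A = mat 1"
    using assms matrix_left_right_inverse by blast
  define M where "M = matrix_inv A"
  have M: "A ** M = mat 1 \<and> M ** A = mat 1"
    unfolding M_def matrix_inv_def using someI_ex[OF ex] by blast
  have "M = M ** (A ** B)" using assms by simp
  also have "\<dots> = (M ** A) ** B" by (simp add: matrix_mul_assoc)
  also have "\<dots> = B" using M by simp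
  finally show ?thesis unfolding M_def .
qed

lemma matrix_inv_left:
  fixes A :: "real^'n^'n"
  assumes "\<And>x. A *v x = 0 \<Longrightarrow> x = 0"
  shows "matrix_inv A ** A = mat 1"
proof -
  obtain B where "B ** A = mat 1" using assms matrix_left_invertible_ker by blast
  hence "A ** B = mat 1" using matrix_left_right_inverse by blast
  hence "matrix_inv A = B" by (rule matrix_inv_unique)
  thus ?thesis using \<open>B ** A = mat 1\<close> by simp
qed

locale hb =
  fixes r :: "'n::finite" and pa :: "'n \<Rightarrow> 'n" and s0 :: "'n \<Rightarrow> real" and s :: real
    and H :: "('n \<times> real) list"
  assumes tree: "is_tree r pa"
    and s0_pos: "\<forall>i. s0 i > 0"
    and s_pos: "s > 0"
    and hist: "\<forall>l\<in>set H. is_leaf r pa (fst l)"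
begin

lemma pa_r: "pa r = r" using tree unfolding is_tree_def by blast

lemma reach: "\<exists>m. (pa ^^ m) i = r" using tree unfolding is_tree_def by blast

lemma funpow_r: "(pa ^^ m) r = r"
  by (induction m) (auto simp: pa_r)

lemma anc_self: "i \<in> ancestors pa i"
  unfolding ancestors_def by (auto intro: exI[of _ 0])

lemma anc_r: "ancestors pa r = {r}"
  unfolding ancestors_def using funpow_r by auto

lemma anc_pa: "ancestors pa i = insert i (ancestors pa (pa i))"
proof
  show "ancestors pa i \<subseteq> insert i (ancestors pa (pa i))"
  proof
    fix k assume "k \<in> ancestors pa i"
    then obtain m where m: "(pa ^^ m) i = k" unfolding ancestors_def by blast
    show "k \<in> insert i (ancestors pa (pa i))"
    proof (cases m)
      case 0 thus ?thesis using m by simp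
    next
      case (Suc m')
      hence "(pa ^^ m') (pa i) = k" using m by (metis funpow_Suc_right comp_apply)
      thus ?thesis unfolding ancestors_def by blast
    qed
  qed
next
  show "insert i (ancestors pa (pa i)) \<subseteq> ancestors pa i"
  proof
    fix k assume "k \<in> insert i (ancestors pa (pa i))"
    thus "k \<in> ancestors pa i"
    proof
      assume "k = i" thus ?thesis using anc_self by simp
    next
      assume "k \<in> ancestors pa (pa i)"
      then obtain m where "(pa ^^ m) (pa i) = k" unfolding ancestors_def by blast
      hence "(pa ^^ Suc m) i = k" by (metis funpow_Suc_right comp_apply)
      thus ?thesis unfolding ancestors_def by blast
    qed
  qed
qed

lemma funpow_mult_fix:
  assumes "(pa ^^ p) i = i" shows "(pa ^^ (k * p)) i = i"
proof (induction k)
  case 0 thus ?case by simp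
next
  case (Suc k)
  have e: "Suc k * p = k * p + p" by simp
  have "(pa ^^ (Suc k * p)) i = (pa ^^ (k * p)) ((pa ^^ p) i)"
    unfolding e by (simp only: funpow_add comp_apply)
  thus ?case using assms Suc by simp
qed

lemma acyc: assumes "i \<noteq> r" shows "i \<notin> ancestors pa (pa i)"
proof
  assume "i \<in> ancestors pa (pa i)"
  then obtain m where "(pa ^^ m) (pa i) = i" unfolding ancestors_def by blast
  hence p: "(pa ^^ Suc m) i = i" by (metis funpow_Suc_right comp_apply)
  obtain M where M: "(pa ^^ M) i = r" using reach by blast
  have "M \<le> M * Suc m" by simp
  then obtain d where d: "M * Suc m = d + M" using le_Suc_ex by (metis add.commute)
  have "(pa ^^ (M * Suc m)) i = (pa ^^ d) ((pa ^^ M) i)" unfolding d by (simp only: funpow_add comp_apply)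
  also have "\<dots> = r" using M funpow_r by simp
  finally show False using funpow_mult_fix[OF p, of M] assms by simp
qed

lemma pa_neq: "i \<noteq> r \<Longrightarrow> pa i \<noteq> i"
proof
  assume "i \<noteq> r" "pa i = i"
  thus False using acyc[of i] anc_self[of i] by simp
qed

lemma r_anc: "r \<in> ancestors pa i"
  using reach unfolding ancestors_def by blast

lemma anc_trans: "k \<in> ancestors pa j \<Longrightarrow> j \<in> ancestors pa l \<Longrightarrow> k \<in> ancestors pa l"
proof -
  assume "k \<in> ancestors pa j" "j \<in> ancestors pa l"
  then obtain m m' where "(pa ^^ m) j = k" "(pa ^^ m') l = j" unfolding ancestors_def by blast
  hence "(pa ^^ (m + m')) l = k" by (simp only: funpow_add comp_apply)
  thus ?thesis unfolding ancestors_def by blast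
qed

definition Bm :: "real^'n^'n" where "Bm = (\<chi> i j. (if j = i then 1 else 0) - (if i \<noteq> r \<and> j = pa i then 1 else 0))"
definition Vm :: "real^'n^'n" where "Vm = (\<chi> i k. if k \<in> ancestors pa i then 1 else 0)"
definition Sd :: "real^'n^'n" where "Sd = (\<chi> i j. if i = j then (s0 i)^2 else 0)"
definition Si :: "real^'n^'n" where "Si = (\<chi> i j. if i = j then 1 / (s0 i)^2 else 0)"

lemma Bm_mul: "(Bm ** M) $ i $ k = M $ i $ k - (if i = r then 0 else M $ (pa i) $ k)"
proof -
  have "(Bm ** M) $ i $ k = (\<Sum>j\<in>UNIV. ((if j = i then 1 else 0) - (if i \<noteq> r \<and> j = pa i then 1 else 0)) * M $ j $ k)"
    unfolding Bm_def matrix_matrix_mult_def by simp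
  also have "\<dots> = (\<Sum>j\<in>UNIV. (if j = i then M $ j $ k else 0)) - (\<Sum>j\<in>UNIV. (if i \<noteq> r \<and> j = pa i then M $ j $ k else 0))"
    unfolding sum_subtractf[symmetric] by (rule sum.cong) auto
  also have "\<dots> = M $ i $ k - (if i = r then 0 else M $ (pa i) $ k)"
    by (cases "i = r") simp_all
  finally show ?thesis .
qed

lemma BV: "Bm ** Vm = mat 1"
proof -
  have "(Bm ** Vm) $ i $ k = mat 1 $ i $ k" for i k
  proof (cases "i = r")
    case True thus ?thesis by (simp add: Bm_mul Vm_def anc_r mat_def)
  next
    case False
    thus ?thesis using acyc[OF False] anc_pa[of i]
      by (auto simp add: Bm_mul Vm_def mat_def)
  qed
  thus ?thesis by (simp add: vec_eq_iff)
qed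

lemma VB: "Vm ** Bm = mat 1" using BV matrix_left_right_inverse by blast

lemma prior_cov_eq: "prior_cov pa s0 = Vm ** Sd ** transpose Vm"
proof -
  have "(Vm ** Sd ** transpose Vm) $ i $ j = prior_cov pa s0 $ i $ j" for i j
  proof -
    have "(Vm ** Sd ** transpose Vm) $ i $ j = (\<Sum>k\<in>UNIV. (\<Sum>l\<in>UNIV. Vm $ i $ l * Sd $ l $ k) * Vm $ j $ k)"
      by (simp add: matrix_matrix_mult_def transpose_def)
    also have "\<dots> = (\<Sum>k\<in>UNIV. if k \<in> ancestors pa i \<inter> ancestors pa j then (s0 k)^2 else 0)"
    proof (rule sum.cong)
      fix k
      have "(\<Sum>l\<in>UNIV. Vm $ i $ l * Sd $ l $ k) = (\<Sum>l\<in>UNIV. if l = k then (if k \<in> ancestors pa i then (s0 k)^2 else 0) else 0)"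
        by (rule sum.cong) (auto simp: Vm_def Sd_def)
      thus "(\<Sum>l\<in>UNIV. Vm $ i $ l * Sd $ l $ k) * Vm $ j $ k = (if k \<in> ancestors pa i \<inter> ancestors pa j then (s0 k)^2 else 0)"
        by (simp add: Vm_def)
    qed simp
    also have "\<dots> = (\<Sum>k\<in>ancestors pa i \<inter> ancestors pa j. (s0 k)^2)"
      by (simp add: sum.If_cases Int_def)
    finally show ?thesis by (simp add: prior_cov_def)
  qed
  thus ?thesis by (simp add: vec_eq_iff)
qed

lemma SdSi: "Sd ** Si = mat 1"
proof -
  have "(Sd ** Si) $ i $ k = mat 1 $ i $ k" for i k
  proof -
    have "(Sd ** Si) $ i $ k = (\<Sum>l\<in>UNIV. (if i = l then (s0 i)^2 else 0) * (if l = k then 1 / (s0 l)^2 else 0))"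
      by (simp add: matrix_matrix_mult_def Sd_def Si_def)
    also have "\<dots> = (if i = k then 1 else 0)"
      using s0_pos[rule_format, of i] s0_pos[rule_format, of k] by (simp add: if_distrib[where f="\<lambda>x. x * _"] cong: if_cong)
    finally show ?thesis by (simp add: mat_def)
  qed
  thus ?thesis by (simp add: vec_eq_iff)
qed

lemma prec_eq: "matrix_inv (prior_cov pa s0) = transpose Bm ** Si ** Bm"
proof (rule matrix_inv_unique)
  have "prior_cov pa s0 ** (transpose Bm ** Si ** Bm) = Vm ** Sd ** (transpose Vm ** transpose Bm) ** Si ** Bm"
    by (simp add: prior_cov_eq matrix_mul_assoc)
  also have "transpose Vm ** transpose Bm = mat 1"
    using BV by (metis matrix_transpose_mul transpose_mat)
  also have "Vm ** Sd ** mat 1 ** Si ** Bm = Vm ** (Sd ** Si) ** Bm"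
    by (simp add: matrix_mul_assoc)
  also have "\<dots> = mat 1" using SdSi VB by simp
  finally show "prior_cov pa s0 ** (transpose Bm ** Si ** Bm) = mat 1" .
qed

lemma Bv: "(Bm *v y) $ i = y $ i - (if i = r then 0 else y $ (pa i))"
proof -
  have "(Bm *v y) $ i = (\<Sum>j\<in>UNIV. ((if j = i then 1 else 0) - (if i \<noteq> r \<and> j = pa i then 1 else 0)) * y $ j)"
    unfolding Bm_def matrix_vector_mult_def by simp
  also have "\<dots> = (\<Sum>j\<in>UNIV. (if j = i then y $ j else 0)) - (\<Sum>j\<in>UNIV. (if i \<noteq> r \<and> j = pa i then y $ j else 0))"
    unfolding sum_subtractf[symmetric] by (rule sum.cong) auto
  also have "\<dots> = y $ i - (if i = r then 0 else y $ (pa i))"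
    by (cases "i = r") simp_all
  finally show ?thesis .
qed

lemma BTv: "(transpose Bm *v z) $ v = z $ v - (\<Sum>i\<in>children r pa v. z $ i)"
proof -
  have "(transpose Bm *v z) $ v = (\<Sum>i\<in>UNIV. ((if v = i then 1 else 0) - (if i \<noteq> r \<and> v = pa i then 1 else 0)) * z $ i)"
    unfolding Bm_def matrix_vector_mult_def transpose_def by simp
  also have "\<dots> = (\<Sum>i\<in>UNIV. (if i = v then z $ i else 0)) - (\<Sum>i\<in>UNIV. (if i \<in> children r pa v then z $ i else 0))"
    unfolding sum_subtractf[symmetric] by (rule sum.cong) (auto simp: children_def)
  also have "\<dots> = z $ v - (\<Sum>i\<in>children r pa v. z $ i)"
    by (simp add: sum.If_cases)
  finally show ?thesis .
qed

lemma Siv: "(Si *v z) $ i = z $ i / (s0 i)^2"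
  by (simp add: Si_def matrix_vector_mult_def if_distrib[where f="\<lambda>x. x * _"] cong: if_cong)

definition Dn :: "real^'n^'n" where
  "Dn = (\<chi> i j. if i = j then real (pulls H i) / s^2 else 0)"

lemma Dv: "(Dn *v y) $ i = real (pulls H i) / s^2 * y $ i"
  by (simp add: Dn_def matrix_vector_mult_def if_distrib[where f="\<lambda>x. x * _"] cong: if_cong)

definition Lam :: "real^'n^'n" where
  "Lam = matrix_inv (prior_cov pa s0) + Dn"

lemma Lam_v: "Lam *v y = transpose Bm *v (Si *v (Bm *v y)) + Dn *v y"
  unfolding Lam_def prec_eq by (simp add: matrix_vector_mul_assoc[symmetric] matrix_vector_mult_add_rdistrib del: transpose_matrix_vector)

lemma Lam_comp: "(Lam *v y) $ v =
   (y $ v - (if v = r then 0 else y $ (pa v))) / (s0 v)^2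
   - (\<Sum>i\<in>children r pa v. (y $ i - (if i = r then 0 else y $ (pa i))) / (s0 i)^2)
   + real (pulls H v) / s^2 * y $ v"
  unfolding Lam_v vector_add_component BTv Siv Bv Dv by simp

lemma sum_transpose_v:
  fixes A :: "real^'n^'n"
  shows "(\<Sum>v\<in>UNIV. y $ v * (transpose A *v w) $ v) = (\<Sum>i\<in>UNIV. (A *v y) $ i * w $ i)"
proof -
  have "(\<Sum>v\<in>UNIV. y $ v * (transpose A *v w) $ v) = (\<Sum>v\<in>UNIV. \<Sum>i\<in>UNIV. y $ v * A $ i $ v * w $ i)"
    by (simp add: matrix_vector_mult_def transpose_def sum_distrib_left mult.assoc del: transpose_matrix_vector)
  also have "\<dots> = (\<Sum>i\<in>UNIV. \<Sum>v\<in>UNIV. y $ v * A $ i $ v * w $ i)"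
    by (rule sum.swap)
  also have "\<dots> = (\<Sum>i\<in>UNIV. (A *v y) $ i * w $ i)"
    by (simp add: matrix_vector_mult_def sum_distrib_left sum_distrib_right mult.commute mult.left_commute)
  finally show ?thesis .
qed

lemma Lam_ker: assumes "Lam *v y = 0" shows "y = 0"
proof -
  let ?d = "Bm *v y"
  have "0 = (\<Sum>v\<in>UNIV. y $ v * (Lam *v y) $ v)" using assms by simp
  also have "\<dots> = (\<Sum>v\<in>UNIV. y $ v * (transpose Bm *v (Si *v ?d)) $ v) + (\<Sum>v\<in>UNIV. y $ v * (Dn *v y) $ v)"
    unfolding Lam_v by (simp add: sum.distrib distrib_left)
  also have "(\<Sum>v\<in>UNIV. y $ v * (transpose Bm *v (Si *v ?d)) $ v) = (\<Sum>i\<in>UNIV. (?d $ i)^2 / (s0 i)^2)"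
    unfolding sum_transpose_v by (simp add: Siv power2_eq_square)
  also have "(\<Sum>v\<in>UNIV. y $ v * (Dn *v y) $ v) = (\<Sum>v\<in>UNIV. real (pulls H v) / s^2 * (y $ v)^2)"
    by (simp add: Dv power2_eq_square mult.commute mult.left_commute)
  finally have eq: "0 = (\<Sum>i\<in>UNIV. (?d $ i)^2 / (s0 i)^2) + (\<Sum>v\<in>UNIV. real (pulls H v) / s^2 * (y $ v)^2)" .
  have n1: "(\<Sum>i\<in>UNIV. (?d $ i)^2 / (s0 i)^2) \<ge> 0" by (intro sum_nonneg) simp
  have n2: "(\<Sum>v\<in>UNIV. real (pulls H v) / s^2 * (y $ v)^2) \<ge> 0" by (intro sum_nonneg) simp
  have "(\<Sum>i\<in>UNIV. (?d $ i)^2 / (s0 i)^2) = 0" using eq n1 n2 by linarith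
  hence "\<forall>i\<in>UNIV. (?d $ i)^2 / (s0 i)^2 = 0"
    by (subst (asm) sum_nonneg_eq_0_iff) auto
  hence "?d = 0"
  proof (unfold vec_eq_iff, intro allI)
    fix i assume h: "\<forall>i\<in>UNIV. (?d $ i)^2 / (s0 i)^2 = 0"
    have "s0 i > 0" using s0_pos by blast
    have "(?d $ i)^2 / (s0 i)^2 = 0" using h by blast
    hence "(?d $ i)^2 = 0 \<or> (s0 i)^2 = 0" unfolding divide_eq_0_iff .
    hence "(?d $ i)^2 = 0" using \<open>s0 i > 0\<close> by (metis power_not_zero less_irrefl)
    thus "?d $ i = 0 $ i" by simp
  qed
  hence "Vm *v ?d = 0" by simp
  moreover have "Vm *v ?d = (Vm ** Bm) *v y" by (rule matrix_vector_mul_assoc)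
  ultimately show ?thesis unfolding VB matrix_vector_mul_lid by simp
qed

lemma Lam_inv: "matrix_inv Lam ** Lam = mat 1"
  using Lam_ker matrix_inv_left by blast

end


declare tprec_fuel.simps[simp del]

context hb
begin

lemma pulls_nonleaf: "\<not> is_leaf r pa v \<Longrightarrow> pulls H v = 0"
  unfolding pulls_def using hist by (auto simp: filter_empty_conv)

lemma leaf_children: "is_leaf r pa v \<Longrightarrow> children r pa v = {}"
  unfolding is_leaf_def .

lemma tprec_fuel_nonneg: "tprec_fuel m r pa s0 s H j \<ge> 0"
proof (induction m arbitrary: j)
  case 0
  show ?case by (subst tprec_fuel.simps) (auto intro!: add_nonneg_nonneg divide_nonneg_nonneg)
next
  case (Suc m)
  have q: "(\<Sum>k\<in>children r pa j. tprec_fuel m r pa s0 s H k) \<ge> 0"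
    using Suc by (intro sum_nonneg) auto
  show ?case
    by (subst tprec_fuel.simps) (use q in \<open>auto simp: Let_def intro!: add_nonneg_nonneg divide_nonneg_nonneg\<close>)
qed

lemma tprec_nonneg: "tprec r pa s0 s H j \<ge> 0"
  unfolding tprec_def by (rule tprec_fuel_nonneg)

definition desc :: "'n \<Rightarrow> 'n set" where "desc j = {k. j \<in> ancestors pa k}"

lemma self_desc: "j \<in> desc j" unfolding desc_def using anc_self by simp

lemma child_desc:
  assumes "k \<in> children r pa j" shows "desc k \<subseteq> desc j - {j}"
proof
  fix l assume l: "l \<in> desc k"
  have kr: "k \<noteq> r" and pk: "pa k = j" using assms unfolding children_def by auto
  have "j \<in> ancestors pa k" using anc_pa[of k] anc_self[of j] pk by auto
  hence "j \<in> ancestors pa l" using l anc_trans unfolding desc_def by blast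
  moreover have "l \<noteq> j"
  proof
    assume "l = j"
    hence "k \<in> ancestors pa (pa k)" using l pk unfolding desc_def by simp
    thus False using acyc[OF kr] by simp
  qed
  ultimately show "l \<in> desc j - {j}" unfolding desc_def by simp
qed

lemma stab: "card (desc j) \<le> Suc m \<Longrightarrow>
    tprec_fuel (Suc m) r pa s0 s H j = tprec_fuel m r pa s0 s H j"
proof (induction m arbitrary: j)
  case 0
  show ?case
  proof (cases "is_leaf r pa j")
    case True
    thus ?thesis by (subst (1 2) tprec_fuel.simps) simp
  next
    case False
    then obtain k where k: "k \<in> children r pa j" unfolding is_leaf_def by blast
    have "k \<in> desc j - {j}" using child_desc[OF k] self_desc[of k] by blast
    hence "{j, k} \<subseteq> desc j" "k \<noteq> j" using self_desc[of j] by auto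
    hence "card {j, k} \<le> card (desc j)" by (intro card_mono) auto
    hence "2 \<le> card (desc j)" using \<open>k \<noteq> j\<close> by simp
    thus ?thesis using 0 by simp
  qed
next
  case (Suc m)
  show ?case
  proof (cases "is_leaf r pa j")
    case True
    thus ?thesis by (subst (1 2) tprec_fuel.simps) simp
  next
    case False
    have "tprec_fuel (Suc m) r pa s0 s H k = tprec_fuel m r pa s0 s H k" if k: "k \<in> children r pa j" for k
    proof (rule Suc.IH)
      have "card (desc k) \<le> card (desc j - {j})" using child_desc[OF k] by (intro card_mono) auto
      also have "\<dots> = card (desc j) - 1" using self_desc[of j] by simp
      finally show "card (desc k) \<le> Suc m" using Suc.prems by simp
    qed
    hence "(\<Sum>k\<in>children r pa j. tprec_fuel (Suc m) r pa s0 s H k) = (\<Sum>k\<in>children r pa j. tprec_fuel m r pa s0 s H k)"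
      by (intro sum.cong) auto
    thus ?thesis using False by (subst (1 2) tprec_fuel.simps) simp
  qed
qed

lemma tprec_unfold: "tprec r pa s0 s H j =
  (if is_leaf r pa j then (if pulls H j = 0 then 0 else 1 / ((s0 j)^2 + s^2 / real (pulls H j)))
   else (let q = (\<Sum>k\<in>children r pa j. tprec r pa s0 s H k) in if q = 0 then 0 else 1 / ((s0 j)^2 + 1 / q)))"
proof -
  have "CARD('n) > 0" by simp
  then obtain m where m: "CARD('n) = Suc m" using gr0_implies_Suc by blast
  have st: "tprec_fuel (Suc m) r pa s0 s H k = tprec_fuel m r pa s0 s H k" for k
  proof (rule stab)
    have "card (desc k) \<le> CARD('n)" by (intro card_mono) auto
    thus "card (desc k) \<le> Suc m" using m by simp
  qed
  have S: "(\<Sum>k\<in>children r pa j. tprec_fuel m r pa s0 s H k) = (\<Sum>k\<in>children r pa j. tprec r pa s0 s H k)"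
    unfolding tprec_def m st ..
  show ?thesis unfolding tprec_def[of r pa s0 s H j] m
    by (subst tprec_fuel.simps) (simp only: S nat.case Let_def)
qed

definition Tv :: "'n \<Rightarrow> real" where
  "Tv j = (if is_leaf r pa j then real (pulls H j) / s^2 else (\<Sum>k\<in>children r pa j. tprec r pa s0 s H k))"

lemma Tv_nonneg: "Tv j \<ge> 0"
  unfolding Tv_def using tprec_nonneg by (auto intro!: sum_nonneg)

lemma tprec_T: "tprec r pa s0 s H j = Tv j / (1 + (s0 j)^2 * Tv j)"
proof -
  have s0p: "s0 j > 0" using s0_pos by blast
  show ?thesis
  proof (cases "is_leaf r pa j")
    case True
    show ?thesis
    proof (cases "pulls H j = 0")
      case True thus ?thesis using \<open>is_leaf r pa j\<close> by (subst tprec_unfold) (simp add: Tv_def)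
    next
      case False
      hence np: "real (pulls H j) > 0" by simp
      show ?thesis using \<open>is_leaf r pa j\<close> False s_pos np s0p
        by (subst tprec_unfold) (simp add: Tv_def field_simps)
    qed
  next
    case False
    define q where "q = (\<Sum>k\<in>children r pa j. tprec r pa s0 s H k)"
    have Tq: "Tv j = q" using False by (simp add: Tv_def q_def)
    have "q \<ge> 0" using Tq Tv_nonneg by metis
    show ?thesis
    proof (cases "q = 0")
      case True thus ?thesis using False Tq by (subst tprec_unfold) (simp add: q_def[symmetric])
    next
      case qn: False
      hence "q > 0" using \<open>q \<ge> 0\<close> by simp
      thus ?thesis using False Tq s0p by (subst tprec_unfold) (simp add: q_def[symmetric] Let_def field_simps)
    qed
  qed
qed

lemma hat_var_T: "hat_var r pa s0 s H j = 1 / (1 / (s0 j)^2 + Tv j)"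
  by (simp add: hat_var_def Tv_def)

lemma hat_var_pos: "hat_var r pa s0 s H j > 0"
proof -
  have "s0 j > 0" using s0_pos by blast
  thus ?thesis unfolding hat_var_T using Tv_nonneg[of j] by (simp add: add_pos_nonneg)
qed

lemma Tv_alt: "(\<Sum>i\<in>children r pa j. tprec r pa s0 s H i) + real (pulls H j) / s^2 = Tv j"
  by (cases "is_leaf r pa j") (simp_all add: Tv_def leaf_children pulls_nonleaf)

definition cfac :: "'n \<Rightarrow> real" where "cfac j = hat_var r pa s0 s H j / (s0 j)^2"

lemma cfac_T: "cfac j = 1 / (1 + (s0 j)^2 * Tv j)"
proof -
  have a: "(s0 j)^2 > 0" using s0_pos[rule_format, of j] by simp
  have T: "Tv j \<ge> 0" by (rule Tv_nonneg)
  have d: "1 + (s0 j)^2 * Tv j > 0" using a T by (simp add: add_pos_nonneg)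
  have e: "1 / (s0 j)^2 + Tv j = (1 + (s0 j)^2 * Tv j) / (s0 j)^2" using a by (simp add: field_simps)
  show ?thesis unfolding cfac_def hat_var_T e using a d by simp
qed

lemma tc_aux:
  fixes a T :: real assumes "a > 0" "T \<ge> 0"
  shows "(1 / (1 + a * T) - 1) / a = - (T / (1 + a * T))"
proof -
  have d: "1 + a * T > 0" using assms by (simp add: add_pos_nonneg)
  have "1 / (1 + a * T) - 1 = - (a * T) / (1 + a * T)" using d by (simp add: field_simps)
  hence "(1 / (1 + a * T) - 1) / a = - (a * T) / (1 + a * T) / a" by simp
  also have "\<dots> = - ((a * T) / (a * (1 + a * T)))" by (simp add: divide_divide_eq_left mult.commute)
  also have "\<dots> = - (T / (1 + a * T))" using assms(1) by (subst mult_divide_mult_cancel_left) auto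
  finally show ?thesis .
qed

lemma tc: "(cfac j - 1) / (s0 j)^2 = - tprec r pa s0 s H j"
proof -
  have a: "(s0 j)^2 > 0" using s0_pos[rule_format, of j] by simp
  have T: "Tv j \<ge> 0" by (rule Tv_nonneg)
  have d: "1 + (s0 j)^2 * Tv j > 0" using a T by (simp add: add_pos_nonneg)
  show ?thesis unfolding cfac_T tprec_T using tc_aux[OF a T] .
qed

lemma offpath_row:
  fixes X :: "'n \<Rightarrow> real"
  assumes "v \<noteq> r" and Xv: "X v = cfac v * X (pa v)"
    and Xc: "\<And>i. i \<in> children r pa v \<Longrightarrow> X i = cfac i * X v"
  shows "(X v - X (pa v)) / (s0 v)^2
     - (\<Sum>i\<in>children r pa v. (X i - (if i = r then 0 else X (pa i))) / (s0 i)^2)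
     + real (pulls H v) / s^2 * X v = 0"
proof -
  have "(\<Sum>i\<in>children r pa v. (X i - (if i = r then 0 else X (pa i))) / (s0 i)^2)
      = (\<Sum>i\<in>children r pa v. - tprec r pa s0 s H i * X v)"
  proof (rule sum.cong)
    fix i assume i: "i \<in> children r pa v"
    hence "i \<noteq> r" "pa i = v" unfolding children_def by auto
    hence "(X i - (if i = r then 0 else X (pa i))) / (s0 i)^2 = ((cfac i - 1) / (s0 i)^2) * X v"
      using Xc[OF i] by (simp add: field_simps)
    thus "(X i - (if i = r then 0 else X (pa i))) / (s0 i)^2 = - tprec r pa s0 s H i * X v"
      unfolding tc .
  qed simp
  also have "\<dots> = - (\<Sum>i\<in>children r pa v. tprec r pa s0 s H i) * X v"
    by (simp add: sum_distrib_right sum_negf)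
  finally have S: "(\<Sum>i\<in>children r pa v. (X i - (if i = r then 0 else X (pa i))) / (s0 i)^2)
      = - (\<Sum>i\<in>children r pa v. tprec r pa s0 s H i) * X v" .
  have "(X v - X (pa v)) / (s0 v)^2 = ((cfac v - 1) / (s0 v)^2) * X (pa v)"
    using Xv by (simp add: field_simps)
  also have "\<dots> = - tprec r pa s0 s H v * X (pa v)" unfolding tc ..
  finally have A: "(X v - X (pa v)) / (s0 v)^2 = - tprec r pa s0 s H v * X (pa v)" .
  have "(X v - X (pa v)) / (s0 v)^2
     - (\<Sum>i\<in>children r pa v. (X i - (if i = r then 0 else X (pa i))) / (s0 i)^2)
     + real (pulls H v) / s^2 * X v
     = - tprec r pa s0 s H v * X (pa v) + ((\<Sum>i\<in>children r pa v. tprec r pa s0 s H i) + real (pulls H v) / s^2) * X v"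
    unfolding A S by (simp add: algebra_simps)
  also have "\<dots> = - tprec r pa s0 s H v * X (pa v) + Tv v * cfac v * X (pa v)"
    unfolding Tv_alt Xv by simp
  also have "\<dots> = 0" unfolding tprec_T cfac_T by simp
  finally show ?thesis .
qed

end


fun VVf :: "(nat \<Rightarrow> real) \<Rightarrow> (nat \<Rightarrow> real) \<Rightarrow> nat \<Rightarrow> real" where
  "VVf h c 0 = h 0"
| "VVf h c (Suc k) = h (Suc k) + (c (Suc k))^2 * VVf h c k"

lemma VVf_closed: "VVf h c k = (\<Sum>i<Suc k. (\<Prod>j\<in>{Suc i..<Suc k}. (c j)^2) * h i)"
proof (induction k)
  case 0 thus ?case by simp
next
  case (Suc k)
  have "(\<Sum>i<Suc (Suc k). (\<Prod>j\<in>{Suc i..<Suc (Suc k)}. (c j)^2) * h i)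
      = (\<Sum>i<Suc k. (\<Prod>j\<in>{Suc i..<Suc (Suc k)}. (c j)^2) * h i) + h (Suc k)"
    by simp
  also have "(\<Sum>i<Suc k. (\<Prod>j\<in>{Suc i..<Suc (Suc k)}. (c j)^2) * h i)
      = (\<Sum>i<Suc k. (c (Suc k))^2 * ((\<Prod>j\<in>{Suc i..<Suc k}. (c j)^2) * h i))"
  proof (rule sum.cong)
    fix i assume "i \<in> {..<Suc k}"
    hence "Suc i \<le> Suc k" by simp
    thus "(\<Prod>j\<in>{Suc i..<Suc (Suc k)}. (c j)^2) * h i = (c (Suc k))^2 * ((\<Prod>j\<in>{Suc i..<Suc k}. (c j)^2) * h i)"
      by (simp add: prod.atLeastLessThan_Suc)
  qed simp
  also have "\<dots> = (c (Suc k))^2 * VVf h c k" by (simp only: Suc.IH sum_distrib_left)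
  finally show ?case by simp
qed

lemma E_alg0:
  fixes p h q :: real assumes "h > 0" "q > 0"
  shows "(p * h) / q + (1 / h - 1 / q) * (p * h) = p"
  using assms by (simp add: field_simps)

lemma E_alg:
  fixes p v h q :: real assumes "h > 0" "q > 0"
  shows "(p * (h + (h / q)^2 * v) - (h / q) * p * v) / q + (1 / h - 1 / q) * (p * (h + (h / q)^2 * v)) = p"
  using assms by (simp add: field_simps power2_eq_square)

lemma A_alg:
  fixes p1 v h1 q1 :: real assumes "h1 > 0" "q1 > 0"
  shows "(h1 / q1) * p1 * v * ((1 - h1 / q1) / q1) + (p1 * (h1 + (h1 / q1)^2 * v) - (h1 / q1) * p1 * v) / q1 = (h1 / q1) * p1"
  using assms by (simp add: field_simps power2_eq_square)

fun xfun :: "('n \<Rightarrow> bool) \<Rightarrow> ('n \<Rightarrow> real) \<Rightarrow> ('n \<Rightarrow> real) \<Rightarrow> ('n \<Rightarrow> 'n) \<Rightarrow> nat \<Rightarrow> 'n \<Rightarrow> real" where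
  "xfun P g c p 0 v = (if P v then g v else 0)"
| "xfun P g c p (Suc m) v = (if P v then g v else c v * xfun P g c p m (p v))"

locale hbp = hb r pa s0 s H
  for r :: "'n::finite" and pa and s0 and s and H +
  fixes a :: 'n and \<psi> :: "'n list"
  assumes a_leaf: "is_leaf r pa a"
    and path_ne: "\<psi> \<noteq> []"
    and path_hd: "hd \<psi> = r"
    and path_last: "last \<psi> = a"
    and path_dist: "distinct \<psi>"
    and path_pa: "\<forall>k. Suc k < length \<psi> \<longrightarrow> pa (\<psi> ! Suc k) = \<psi> ! k"
begin

abbreviation "L \<equiv> length \<psi>"

lemma L_pos: "L > 0" using path_ne by simp

lemma psi0: "\<psi> ! 0 = r" using path_ne path_hd by (simp add: hd_conv_nth)

lemma psiL: "\<psi> ! (L - 1) = a" using path_ne path_last by (simp add: last_conv_nth)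

lemma psi_r: "k < L \<Longrightarrow> \<psi> ! k = r \<longleftrightarrow> k = 0"
  using psi0 path_dist L_pos nth_eq_iff_index_eq by metis

lemma psi_pa: "0 < k \<Longrightarrow> k < L \<Longrightarrow> pa (\<psi> ! k) = \<psi> ! (k - 1)"
  using path_pa[rule_format, of "k - 1"] by simp

lemma r_in: "r \<in> set \<psi>" using psi0 L_pos nth_mem by metis

lemma child_on_path:
  assumes "i \<in> children r pa v" "j < L" "i = \<psi> ! j"
  shows "0 < j \<and> v = \<psi> ! (j - 1)"
proof -
  have "i \<noteq> r" "pa i = v" using assms(1) unfolding children_def by auto
  have "j \<noteq> 0"
  proof
    assume "j = 0" hence "i = r" using assms(3) psi0 by simp
    thus False using \<open>i \<noteq> r\<close> by simp
  qed
  thus ?thesis using psi_pa[of j] assms \<open>pa i = v\<close> by simp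
qed

lemma child_off: "i \<in> children r pa v \<Longrightarrow> v \<notin> set \<psi> \<Longrightarrow> i \<notin> set \<psi>"
  using child_on_path by (metis in_set_conv_nth less_imp_diff_less)

lemma next_child: "Suc k < L \<Longrightarrow> \<psi> ! Suc k \<in> children r pa (\<psi> ! k)"
  unfolding children_def using psi_r[of "Suc k"] path_pa by auto

lemma children_path:
  assumes "k < L" "i \<in> children r pa (\<psi> ! k)" "i \<in> set \<psi>"
  shows "Suc k < L \<and> i = \<psi> ! Suc k"
proof -
  obtain j where j: "j < L" "i = \<psi> ! j" using assms(3) by (metis in_set_conv_nth)
  have "0 < j" "\<psi> ! k = \<psi> ! (j - 1)" using child_on_path[OF assms(2) j] by auto
  hence "k = j - 1" using path_dist assms(1) j(1) nth_eq_iff_index_eq by (metis less_imp_diff_less)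
  thus ?thesis using j \<open>0 < j\<close> by simp
qed

definition hh :: "nat \<Rightarrow> real" where "hh k = hat_var r pa s0 s H (\<psi> ! k)"
definition cc :: "nat \<Rightarrow> real" where "cc k = cfac (\<psi> ! k)"
definition ss :: "nat \<Rightarrow> real" where "ss k = (s0 (\<psi> ! k))^2"
definition PP :: "nat \<Rightarrow> real" where "PP k = (\<Prod>j\<in>{Suc k..<L}. cc j)"
definition XP :: "nat \<Rightarrow> real" where "XP k = PP k * VVf hh cc k"
definition idx :: "'n \<Rightarrow> nat" where "idx v = (THE k. k < L \<and> \<psi> ! k = v)"
definition dep :: "'n \<Rightarrow> nat" where "dep v = (LEAST m. (pa ^^ m) v = r)"
definition X :: "'n \<Rightarrow> real" where
  "X v = xfun (\<lambda>v. v \<in> set \<psi>) (\<lambda>v. XP (idx v)) cfac pa (dep v) v"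

lemma idx_nth: "k < L \<Longrightarrow> idx (\<psi> ! k) = k"
  unfolding idx_def
  by (rule the_equality) (use path_dist nth_eq_iff_index_eq in auto)

lemma dep_Suc: assumes "v \<noteq> r" shows "dep v = Suc (dep (pa v))"
proof -
  have ex: "\<exists>m. (pa ^^ m) v = r" by (rule reach)
  have dv: "(pa ^^ dep v) v = r" unfolding dep_def using LeastI_ex[OF ex] .
  have "dep v \<noteq> 0" using dv assms by (cases "dep v") auto
  then obtain d where d: "dep v = Suc d" using not0_implies_Suc by blast
  have "(pa ^^ d) (pa v) = r" using dv d by (metis funpow_Suc_right comp_apply)
  hence le1: "dep (pa v) \<le> d" unfolding dep_def by (rule Least_le)
  have ex2: "\<exists>m. (pa ^^ m) (pa v) = r" by (rule reach)
  have "(pa ^^ dep (pa v)) (pa v) = r" unfolding dep_def using LeastI_ex[OF ex2] .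
  hence "(pa ^^ Suc (dep (pa v))) v = r" by (metis funpow_Suc_right comp_apply)
  hence "dep v \<le> Suc (dep (pa v))" unfolding dep_def by (rule Least_le)
  thus ?thesis using le1 d by simp
qed

lemma X_on: "k < L \<Longrightarrow> X (\<psi> ! k) = XP k"
  unfolding X_def by (cases "dep (\<psi> ! k)") (simp_all add: idx_nth)

lemma X_off: assumes "v \<notin> set \<psi>" shows "X v = cfac v * X (pa v)"
proof -
  have "v \<noteq> r" using assms r_in by auto
  thus ?thesis unfolding X_def using assms by (simp add: dep_Suc)
qed

end


context hbp
begin

definition Xvec :: "real^'n" where "Xvec = (\<chi> v. X v)"

definition R :: "'n \<Rightarrow> real" where
  "R v = (X v - (if v = r then 0 else X (pa v))) / (s0 v)^2
   - (\<Sum>i\<in>children r pa v. (X i - (if i = r then 0 else X (pa i))) / (s0 i)^2)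
   + real (pulls H v) / s^2 * X v"

lemma Xvec_comp: "Xvec $ i = X i" unfolding Xvec_def by simp

lemma Lam_X: "(Lam *v Xvec) $ v = R v"
  unfolding Lam_comp R_def Xvec_comp ..

lemma row_off: assumes "v \<notin> set \<psi>" shows "R v = 0"
proof -
  have vr: "v \<noteq> r" using assms r_in by auto
  have "(X v - X (pa v)) / (s0 v)^2
     - (\<Sum>i\<in>children r pa v. (X i - (if i = r then 0 else X (pa i))) / (s0 i)^2)
     + real (pulls H v) / s^2 * X v = 0"
  proof (rule offpath_row[OF vr])
    show "X v = cfac v * X (pa v)" using X_off[OF assms] .
    fix i assume i: "i \<in> children r pa v"
    hence "pa i = v" unfolding children_def by simp
    thus "X i = cfac i * X v" using X_off[OF child_off[OF i assms]] by simp
  qed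
  thus ?thesis unfolding R_def using vr by simp
qed

lemma off_term:
  assumes "k < L" "i \<in> children r pa (\<psi> ! k)" "i \<notin> set \<psi>"
  shows "(X i - (if i = r then 0 else X (pa i))) / (s0 i)^2 = - tprec r pa s0 s H i * XP k"
proof -
  have "i \<noteq> r" "pa i = \<psi> ! k" using assms(2) unfolding children_def by auto
  hence "(X i - (if i = r then 0 else X (pa i))) / (s0 i)^2 = ((cfac i - 1) / (s0 i)^2) * XP k"
    using X_off[OF assms(3)] X_on[OF assms(1)] by (simp add: field_simps)
  thus ?thesis unfolding tc .
qed

lemma hh_pos: "hh k > 0" unfolding hh_def by (rule hat_var_pos)
lemma ss_pos: "ss k > 0" unfolding ss_def using s0_pos[rule_format, of "\<psi> ! k"] by simp
lemma cc_eq: "cc k = hh k / ss k" unfolding cc_def hh_def ss_def cfac_def ..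

lemma Tv_hh: "Tv (\<psi> ! k) = 1 / hh k - 1 / ss k"
proof -
  have "hh k = 1 / (1 / ss k + Tv (\<psi> ! k))" unfolding hh_def ss_def hat_var_T ..
  hence "1 / hh k = 1 / ss k + Tv (\<psi> ! k)" by simp
  thus ?thesis by simp
qed

lemma PP_last: "PP (L - 1) = 1" unfolding PP_def using L_pos by simp

lemma PP_step: "Suc k < L \<Longrightarrow> PP k = cc (Suc k) * PP (Suc k)"
  unfolding PP_def by (simp add: prod.atLeast_Suc_lessThan)

lemma F_lemma:
  assumes "k < L"
  shows "(XP k - (if k = 0 then 0 else XP (k - 1))) / ss k + XP k * Tv (\<psi> ! k) = PP k"
proof (cases k)
  case 0
  have "XP 0 = PP 0 * hh 0" unfolding XP_def by simp
  thus ?thesis using 0 E_alg0[of "hh 0" "ss 0" "PP 0", OF hh_pos ss_pos] unfolding Tv_hh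
    by (simp add: mult.commute)
next
  case (Suc k')
  let ?p = "PP k" and ?v = "VVf hh cc k'" and ?h = "hh k" and ?q = "ss k"
  have XPk: "XP k = ?p * (?h + (?h / ?q)^2 * ?v)" unfolding XP_def Suc cc_eq by simp
  have XPk1: "XP (k - 1) = (?h / ?q) * ?p * ?v"
    unfolding XP_def using PP_step[of k'] assms Suc by (simp add: cc_eq)
  show ?thesis
    using E_alg[of ?h ?q ?p ?v, OF hh_pos ss_pos] Suc unfolding Tv_hh XPk XPk1
    by (simp add: mult.commute)
qed

lemma A_lemma:
  assumes "Suc k < L"
  shows "XP k * tprec r pa s0 s H (\<psi> ! Suc k) + (XP (Suc k) - XP k) / ss (Suc k) = PP k"
proof -
  let ?p = "PP (Suc k)" and ?v = "VVf hh cc k" and ?h = "hh (Suc k)" and ?q = "ss (Suc k)"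
  have Pk: "PP k = (?h / ?q) * ?p" using PP_step[OF assms] cc_eq by simp
  have XPk: "XP k = (?h / ?q) * ?p * ?v" unfolding XP_def Pk ..
  have XPS: "XP (Suc k) = ?p * (?h + (?h / ?q)^2 * ?v)" unfolding XP_def cc_eq by simp
  have tp0: "tprec r pa s0 s H (\<psi> ! Suc k) = - ((cc (Suc k) - 1) / ss (Suc k))"
    using tc[of "\<psi> ! Suc k"] unfolding cc_def[symmetric] ss_def[symmetric] by simp
  have "- ((cc (Suc k) - 1) / ss (Suc k)) = (1 - cc (Suc k)) / ss (Suc k)"
    by (simp add: minus_divide_left)
  hence tp: "tprec r pa s0 s H (\<psi> ! Suc k) = (1 - ?h / ?q) / ?q"
    using tp0 cc_eq by simp
  show ?thesis unfolding XPk XPS tp Pk using A_alg[of ?h ?q ?p ?v, OF hh_pos ss_pos] .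
qed

lemma row_on:
  assumes k: "k < L"
  shows "R (\<psi> ! k) = (if k = L - 1 then 1 else 0)"
proof -
  let ?v = "\<psi> ! k"
  have F: "(X ?v - (if ?v = r then 0 else X (pa ?v))) / (s0 ?v)^2 = (XP k - (if k = 0 then 0 else XP (k - 1))) / ss k"
    using psi_r[OF k] psi_pa[of k] k X_on[OF k] X_on[of "k - 1"] unfolding ss_def by auto
  show ?thesis
  proof (cases "Suc k < L")
    case True
    let ?w = "\<psi> ! Suc k"
    have w: "?w \<in> children r pa ?v" using next_child[OF True] .
    have wr: "?w \<noteq> r" using psi_r[OF True] by simp
    have pw: "pa ?w = ?v" using path_pa True by simp
    have fin: "finite (children r pa ?v)" by simp
    have offs: "i \<notin> set \<psi>" if "i \<in> children r pa ?v - {?w}" for i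
      using children_path[OF k, of i] that by auto
    have S1: "(\<Sum>i\<in>children r pa ?v. (X i - (if i = r then 0 else X (pa i))) / (s0 i)^2)
      = (X ?w - X ?v) / (s0 ?w)^2 + (\<Sum>i\<in>children r pa ?v - {?w}. (X i - (if i = r then 0 else X (pa i))) / (s0 i)^2)"
      using sum.remove[OF fin w, of "\<lambda>i. (X i - (if i = r then 0 else X (pa i))) / (s0 i)^2"] wr pw by simp
    have S2: "(\<Sum>i\<in>children r pa ?v - {?w}. (X i - (if i = r then 0 else X (pa i))) / (s0 i)^2)
      = (\<Sum>i\<in>children r pa ?v - {?w}. - tprec r pa s0 s H i * XP k)"
      using off_term[OF k] offs by (intro sum.cong) auto
    have S3: "(\<Sum>i\<in>children r pa ?v - {?w}. tprec r pa s0 s H i)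
      = (\<Sum>i\<in>children r pa ?v. tprec r pa s0 s H i) - tprec r pa s0 s H ?w"
      using sum.remove[OF fin w, of "tprec r pa s0 s H"] by simp
    have T: "(\<Sum>i\<in>children r pa ?v. tprec r pa s0 s H i) = Tv ?v - real (pulls H ?v) / s^2"
      using Tv_alt[of ?v] by simp
    have Xw: "X ?w = XP (Suc k)" using X_on[OF True] .
    have Xv: "X ?v = XP k" using X_on[OF k] .
    have S2b: "(\<Sum>i\<in>children r pa ?v - {?w}. - tprec r pa s0 s H i * XP k)
        = - (\<Sum>i\<in>children r pa ?v - {?w}. tprec r pa s0 s H i) * XP k"
      by (simp only: sum_distrib_right[symmetric] sum_negf)
    have S: "(\<Sum>i\<in>children r pa ?v. (X i - (if i = r then 0 else X (pa i))) / (s0 i)^2)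
        = (XP (Suc k) - XP k) / ss (Suc k) - (Tv ?v - real (pulls H ?v) / s^2 - tprec r pa s0 s H ?w) * XP k"
      unfolding S1 S2 S2b S3 T Xw Xv ss_def by (simp add: algebra_simps)
    have "R ?v = (XP k - (if k = 0 then 0 else XP (k - 1))) / ss k
        - ((XP (Suc k) - XP k) / ss (Suc k) - (Tv ?v - real (pulls H ?v) / s^2 - tprec r pa s0 s H ?w) * XP k)
        + real (pulls H ?v) / s^2 * XP k"
      unfolding R_def F S by (simp only: Xv)
    also have "\<dots> = ((XP k - (if k = 0 then 0 else XP (k - 1))) / ss k + XP k * Tv ?v)
        - (XP k * tprec r pa s0 s H ?w + (XP (Suc k) - XP k) / ss (Suc k))"
      by (simp add: algebra_simps)
    also have "\<dots> = 0" unfolding F_lemma[OF k] A_lemma[OF True] by simp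
    finally show ?thesis using True by simp
  next
    case False
    hence kL: "k = L - 1" using k by simp
    hence va: "?v = a" using psiL by simp
    have ch: "children r pa ?v = {}" using va a_leaf leaf_children by simp
    have Tva: "Tv ?v = real (pulls H ?v) / s^2" using va a_leaf unfolding Tv_def by simp
    have "R ?v = (XP k - (if k = 0 then 0 else XP (k - 1))) / ss k + XP k * Tv ?v"
      unfolding R_def F ch Tva sum.empty by (simp only: X_on[OF k]) (simp add: algebra_simps)
    also have "\<dots> = PP k" using F_lemma[OF k] .
    also have "\<dots> = 1" using kL PP_last by simp
    finally show ?thesis using kL by simp
  qed
qed

lemma Lam_X_axis: "Lam *v Xvec = axis a 1"
proof -
  have "(Lam *v Xvec) $ v = axis a 1 $ v" for v
  proof (cases "v \<in> set \<psi>")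
    case True
    then obtain k where k: "k < L" "v = \<psi> ! k" by (metis in_set_conv_nth)
    have "(k = L - 1) \<longleftrightarrow> v = a"
      using k psiL path_dist nth_eq_iff_index_eq[of \<psi> k "L - 1"] L_pos by auto
    thus ?thesis using row_on[OF k(1)] k Lam_X by (simp add: axis_def)
  next
    case False
    have "v \<noteq> a" using False psiL L_pos by (metis diff_less nth_mem zero_less_one)
    thus ?thesis using row_off[OF False] Lam_X by (simp add: axis_def)
  qed
  thus ?thesis by (simp add: vec_eq_iff)
qed

lemma main: "post_var pa s0 s H a =
    (\<Sum>i<length \<psi>. (\<Prod>j\<in>{Suc i..<length \<psi>}.
        (hat_var r pa s0 s H (\<psi> ! j))^2 / (s0 (\<psi> ! j))^4) * hat_var r pa s0 s H (\<psi> ! i))"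
proof -
  have pc: "post_cov pa s0 s H = matrix_inv Lam" by (simp add: post_cov_def Lam_def Dn_def)
  have "matrix_inv Lam *v (Lam *v Xvec) = (matrix_inv Lam ** Lam) *v Xvec"
    by (rule matrix_vector_mul_assoc)
  hence "matrix_inv Lam *v axis a 1 = Xvec" unfolding Lam_X_axis Lam_inv by simp
  hence "matrix_inv Lam $ a $ a = Xvec $ a"
    by (metis matrix_vector_mult_basis column_def vec_lambda_beta)
  hence "post_var pa s0 s H a = X a" unfolding post_var_def pc Xvec_def by simp
  also have "\<dots> = XP (L - 1)" using X_on[of "L - 1"] psiL L_pos by simp
  also have "\<dots> = VVf hh cc (L - 1)" unfolding XP_def PP_last by simp
  also have "\<dots> = (\<Sum>i<L. (\<Prod>j\<in>{Suc i..<L}. (cc j)^2) * hh i)"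
    unfolding VVf_closed using L_pos by simp
  also have "\<dots> = (\<Sum>i<length \<psi>. (\<Prod>j\<in>{Suc i..<length \<psi>}.
        (hat_var r pa s0 s H (\<psi> ! j))^2 / (s0 (\<psi> ! j))^4) * hat_var r pa s0 s H (\<psi> ! i))"
  proof -
    have "(cc j)^2 = (hat_var r pa s0 s H (\<psi> ! j))^2 / (s0 (\<psi> ! j))^4" for j
      unfolding cc_def cfac_def by (simp add: power_divide power_mult[symmetric])
    thus ?thesis unfolding hh_def by simp
  qed
  finally show ?thesis .
qed

end

theorem lemma2:
  fixes r :: "'n::finite" and pa :: "'n \<Rightarrow> 'n" and s0 :: "'n \<Rightarrow> real" and s :: real
    and H :: "('n \<times> real) list" and a :: 'n and \<psi> :: "'n list"
  assumes tree: "is_tree r pa"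
    and s0_pos: "\<forall>i. s0 i > 0"
    and s_pos: "s > 0"
    and hist: "\<forall>l\<in>set H. is_leaf r pa (fst l)"
    and a_leaf: "is_leaf r pa a"
    and path_ne: "\<psi> \<noteq> []"
    and path_hd: "hd \<psi> = r"
    and path_last: "last \<psi> = a"
    and path_dist: "distinct \<psi>"
    and path_pa: "\<forall>k. Suc k < length \<psi> \<longrightarrow> pa (\<psi> ! Suc k) = \<psi> ! k"
  shows "post_var pa s0 s H a =
    (\<Sum>i<length \<psi>. (\<Prod>j\<in>{Suc i..<length \<psi>}.
        (hat_var r pa s0 s H (\<psi> ! j))^2 / (s0 (\<psi> ! j))^4) * hat_var r pa s0 s H (\<psi> ! i))"
proof -
  interpret hbp r pa s0 s H a \<psi>
    by standard (fact tree s0_pos s_pos hist a_leaf path_ne path_hd path_last path_dist path_pa)+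
  show ?thesis by (rule main)
qed

end
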